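(* Let $X$ be an integrable real random variable ($d=1$) and let $Y_1,\ldots,Y_k\in\mathbb{R}^m$ be conditionally i.i.d. given $X$ with common conditional density $f_{Y|X}$ (joint density $f_X(x)\prod_{i=1}^k f_{Y|X}(y_i|x)$). Let $Y$ be a generic observation with $(X,Y)$ having density $f_X(x)f_{Y|X}(y|x)$, $g(y)=\mathbb{E}[X|Y=y]$, $Z=X-g(Y)$, and $D_2(k)=\mathbb{E}[\min_{1\le i\le k}(X-g(Y_i))^2]$. Assume that conditioned on $X=x$, $Z$ has a Lebesgue density $f_{Z|X}(z|x)$, and that for some $r>0$, \[ M=\sup_{x}\sup_{|z|\le r}f_{Z|X}(z|x)<\infty. \] Then for all sufficiently large $k$, \[ D_2(k)\ge e^{-2}\left(\frac{1}{2M\left(1+\frac k2\right)}\right)^2, \] so that $D_2(k)=\Omega(k^{-2})$.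
   Context: $f=\Omega(h)$ means $f(k)\ge c\,h(k)$ for some $c>0$ and all sufficiently large $k$. *)

theory Defs
  imports "HOL-Probability.Probability"
begin

text \<open>The canonical version of the regression function g(y) = E[X | Y = y],
  computed from the joint density fX(x) fYX(x,y) of (X,Y).
  Here fYX x y stands for the conditional density f_{Y|X}(y|x).\<close>
definition cond_mean :: "(real \<Rightarrow> real) \<Rightarrow> (real \<Rightarrow> 'b::euclidean_space \<Rightarrow> real) \<Rightarrow> 'b \<Rightarrow> real" where
  "cond_mean fX fYX y =
     (\<integral>x. x * fX x * fYX x y \<partial>lborel) / (\<integral>x. fX x * fYX x y \<partial>lborel)"

text \<open>D_2(k) = E[min_{1<=i<=k} (X - g(Y_i))^2], where (X,Y_1,...,Y_k) has joint density
  fX(x) * prod_i fYX(x, y_i). Indices are 0..k-1. Nonnegative (possibly infinite) expectation.\<close>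
definition D2 :: "(real \<Rightarrow> real) \<Rightarrow> (real \<Rightarrow> 'b::euclidean_space \<Rightarrow> real) \<Rightarrow> nat \<Rightarrow> ennreal" where
  "D2 fX fYX k =
     (\<integral>\<^sup>+x. \<integral>\<^sup>+ys. ennreal (fX x * (\<Prod>i<k. fYX x (ys i)) *
                     Min ((\<lambda>i. (x - cond_mean fX fYX (ys i))\<^sup>2) ` {..<k}))
        \<partial>(PiM {..<k} (\<lambda>_. (lborel :: 'b measure))) \<partial>lborel)"

end

theory Submission imports Defs begin

lemma cond_mean_meas:
  fixes fYX :: "real \<Rightarrow> 'b::euclidean_space \<Rightarrow> real"
  assumes fX_meas: "fX \<in> borel_measurable lborel"
    and fYX_meas: "(\<lambda>(x, y). fYX x y) \<in> borel_measurable (lborel \<Otimes>\<^sub>M (lborel :: 'b measure))"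
  shows "cond_mean fX fYX \<in> borel_measurable (lborel :: 'b measure)"
proof -
  have sw: "(\<lambda>(y, x). fYX x y) \<in> borel_measurable ((lborel :: 'b measure) \<Otimes>\<^sub>M (lborel::real measure))"
    using fYX_meas measurable_pair_swap_iff[of "\<lambda>(x, y). fYX x y" lborel lborel borel] by simp
  have sn: "(\<lambda>(y::'b, x::real). x) \<in> borel_measurable ((lborel :: 'b measure) \<Otimes>\<^sub>M (lborel::real measure))"
  proof -
    have "(\<lambda>(y::'b, x::real). x) = snd" by auto
    then show ?thesis using measurable_snd[of "lborel :: 'b measure" "lborel::real measure"] by simp
  qed
  have fx: "(\<lambda>(y::'b, x::real). fX x) \<in> borel_measurable ((lborel :: 'b measure) \<Otimes>\<^sub>M (lborel::real measure))"
  proof -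
    have "(\<lambda>(y::'b, x::real). fX x) = fX \<circ> snd" by auto
    then show ?thesis using measurable_comp[OF measurable_snd fX_meas, of "lborel :: 'b measure"] by simp
  qed
  have p1: "(\<lambda>(y::'b, x::real). x * fX x * fYX x y) \<in> borel_measurable ((lborel :: 'b measure) \<Otimes>\<^sub>M (lborel::real measure))"
    using borel_measurable_times[OF borel_measurable_times[OF sn fx] sw] by (simp add: case_prod_beta')
  have p2: "(\<lambda>(y::'b, x::real). fX x * fYX x y) \<in> borel_measurable ((lborel :: 'b measure) \<Otimes>\<^sub>M (lborel::real measure))"
    using borel_measurable_times[OF fx sw] by (simp add: case_prod_beta')
  have 1: "(\<lambda>y. \<integral>x. x * fX x * fYX x y \<partial>lborel) \<in> borel_measurable (lborel :: 'b measure)"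
    using lborel.borel_measurable_lebesgue_integral[OF p1] .
  have 2: "(\<lambda>y. \<integral>x. fX x * fYX x y \<partial>lborel) \<in> borel_measurable (lborel :: 'b measure)"
    using lborel.borel_measurable_lebesgue_integral[OF p2] .
  have "cond_mean fX fYX = (\<lambda>y. (\<integral>x. x * fX x * fYX x y \<partial>lborel) / (\<integral>x. fX x * fYX x y \<partial>lborel))"
    by (simp add: fun_eq_iff cond_mean_def)
  then show ?thesis using borel_measurable_divide[OF 1 2] by simp
qed


theorem corollary3:
  fixes fX :: "real \<Rightarrow> real"
    and fYX :: "real \<Rightarrow> 'b::euclidean_space \<Rightarrow> real"
    and fZX :: "real \<Rightarrow> real \<Rightarrow> real"
    and r M :: real
  assumes fX_meas: "fX \<in> borel_measurable lborel"
    and fX_nonneg: "\<And>x. fX x \<ge> 0"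
    and fX_prob: "(\<integral>\<^sup>+x. ennreal (fX x) \<partial>lborel) = 1"
    and X_integrable: "integrable lborel (\<lambda>x. x * fX x)"
    and fYX_meas: "(\<lambda>(x, y). fYX x y) \<in> borel_measurable (lborel \<Otimes>\<^sub>M (lborel :: 'b measure))"
    and fYX_nonneg: "\<And>x y. fYX x y \<ge> 0"
    and fYX_prob: "\<And>x. (\<integral>\<^sup>+y. ennreal (fYX x y) \<partial>(lborel :: 'b measure)) = 1"
    and fZX_meas: "\<And>x. fZX x \<in> borel_measurable lborel"
    and fZX_nonneg: "\<And>x z. fZX x z \<ge> 0"
    and fZX_density: "\<And>x. distr (density (lborel :: 'b measure) (\<lambda>y. ennreal (fYX x y))) lborel
                              (\<lambda>y. x - cond_mean fX fYX y)
                          = density lborel (\<lambda>z. ennreal (fZX x z))"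
    and r_pos: "r > 0"
    and M_bdd: "bdd_above {fZX x z | x z. \<bar>z\<bar> \<le> r}"
    and M_def: "M = Sup {fZX x z | x z. \<bar>z\<bar> \<le> r}"
  shows "\<exists>K. \<forall>k\<ge>K. ennreal (exp (-2) * (1 / (2 * M * (1 + real k / 2)))\<^sup>2) \<le> D2 fX fYX k"
  proof -
  have M_ge: "fZX x z \<le> M" if "\<bar>z\<bar> \<le> r" for x z
    unfolding M_def using that by (intro cSup_upper[OF _ M_bdd]) auto
  have M_nonneg: "0 \<le> M" using M_ge[of 0 0] fZX_nonneg[of 0 0] r_pos by linarith
  show ?thesis
  proof (cases "M = 0")
    case True then show ?thesis by (intro exI[of _ 0]) simp
  next
    case False
    then have Mpos: "M > 0" using M_nonneg by linarith
    define K where "K = nat \<lceil>1/(M*r)\<rceil> + 1"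
    show ?thesis
    proof (intro exI allI impI)
      fix k assume kK: "K \<le> k"
      define s where "s = 1/(2*M*(1+real k/2))"
      have kpos: "k \<ge> 1" using kK unfolding K_def by linarith
      have s_pos: "0 < s" unfolding s_def using Mpos by simp
      have s_eq: "s = 1 / (M * (real k + 2))" proof -
        have "2*M*(1+real k/2) = M * (real k + 2)" by (simp add: algebra_simps)
        then show ?thesis unfolding s_def by simp
      qed
      have "1/(M*r) \<le> real k" using kK unfolding K_def by linarith
      then have "1 \<le> M * r * real k" using Mpos r_pos by (simp add: field_simps)
      moreover have "0 \<le> M*r" using Mpos r_pos by simp
      ultimately have "1 \<le> r * (M * (real k + 2))" by (simp add: algebra_simps)
      moreover have "0 < M * (real k + 2)" using Mpos by simp
      ultimately have s_le: "s \<le> r" unfolding s_eq by (simp add: pos_divide_le_eq mult.commute)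
      have c_eq: "1 - 2 * M * s = real k / (real k + 2)"
      proof -
        have "2 * M * s = 2 / (real k + 2)" unfolding s_eq using Mpos by simp
        then show ?thesis by (simp add: field_simps)
      qed
      have c_nonneg: "0 \<le> 1 - 2 * M * s" unfolding c_eq by simp
      have key: "exp(-2) \<le> (1 - 2 * M * s)^k"
      proof -
        have "(1 + 2/real k)^k \<le> exp (2/real k)^k"
          by (intro power_mono) (auto simp: exp_ge_add_one_self)
        also have "\<dots> = exp 2" using kpos by (simp add: exp_of_nat_mult[symmetric])
        finally have h: "(1 + 2/real k)^k \<le> exp 2" .
        have "(1 - 2 * M * s)^k = inverse ((1 + 2/real k)^k)"
          unfolding c_eq using kpos by (simp add: field_simps power_inverse[symmetric])
        moreover have "inverse (exp 2) \<le> inverse ((1 + 2/real k)^k)"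
          using h by (intro le_imp_inverse_le) (auto intro!: zero_less_power add_pos_nonneg)
        ultimately show ?thesis by (simp add: exp_minus)
      qed
      define g where "g = cond_mean fX fYX"
      have g_meas[measurable]: "g \<in> borel_measurable (lborel :: 'b measure)"
        unfolding g_def using fX_meas fYX_meas by (rule cond_mean_meas)
      define A where "A x = {y. s < \<bar>x - g y\<bar>}" for x
      have A_sets[measurable]: "A x \<in> sets lborel" for x
      proof -
        have "(\<lambda>y. x - g y) -` {z::real. s < \<bar>z\<bar>} \<inter> space lborel \<in> sets (lborel :: 'b measure)"
          by (rule measurable_sets[of _ _ lborel]) measurable
        moreover have "(\<lambda>y. x - g y) -` {z::real. s < \<bar>z\<bar>} \<inter> space lborel = A x"
          unfolding A_def by auto
        ultimately show ?thesis by metis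
      qed
      have fYX_meas1[measurable]: "fYX x \<in> borel_measurable lborel" for x
        using measurable_Pair2[OF fYX_meas, of x] by simp
      have prob: "ennreal (1 - 2 * M * s) \<le> (\<integral>\<^sup>+y. ennreal (fYX x y * indicator (A x) y) \<partial>lborel)" for x
      proof -
        define D where "D = density (lborel :: 'b measure) (\<lambda>y. ennreal (fYX x y))"
        define N where "N = density lborel (\<lambda>z. ennreal (fZX x z))"
        define B where "B = {z::real. s < \<bar>z\<bar>}"
        have B_sets[measurable]: "B \<in> sets lborel" unfolding B_def by measurable
        have pD: "prob_space D" unfolding D_def
          by (rule prob_spaceI) (simp add: emeasure_density fYX_prob)
        have h_meas: "(\<lambda>y. x - g y) \<in> measurable D lborel" unfolding D_def by simp
        have N_eq: "distr D lborel (\<lambda>y. x - g y) = N"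
          unfolding D_def N_def g_def by (rule fZX_density)
        have pN: "prob_space N"
          using prob_space.prob_space_distr[OF pD h_meas] N_eq by simp
        have "(\<integral>\<^sup>+y. ennreal (fYX x y * indicator (A x) y) \<partial>lborel) = emeasure D (A x)"
          unfolding D_def using A_sets[of x] by (subst emeasure_density) (auto simp: indicator_def intro!: nn_integral_cong)
        also have "emeasure D (A x) = emeasure N B"
        proof -
          have "A x = (\<lambda>y. x - g y) -` B \<inter> space D"
            unfolding A_def B_def D_def by auto
          then show ?thesis using emeasure_distr[OF h_meas B_sets] N_eq by simp
        qed
        also have "\<dots> = ennreal (measure N B)"
          using finite_measure.emeasure_eq_measure[OF prob_space.finite_measure[OF pN]] by simp
        finally have eq: "(\<integral>\<^sup>+y. ennreal (fYX x y * indicator (A x) y) \<partial>lborel) = ennreal (measure N B)" .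
        have I_sets: "{-s..s} \<in> sets N" unfolding N_def by simp
        have compl: "space N - {-s..s} = B" unfolding N_def B_def by auto
        have "emeasure N {-s..s} = (\<integral>\<^sup>+z. ennreal (fZX x z) * indicator {-s..s} z \<partial>lborel)"
          unfolding N_def using fZX_meas[of x] by (subst emeasure_density) auto
        also have "\<dots> \<le> (\<integral>\<^sup>+z. ennreal M * indicator {-s..s} z \<partial>lborel)"
          using s_le by (intro nn_integral_mono) (auto simp: indicator_def intro!: M_ge ennreal_leI)
        also have "\<dots> = ennreal M * ennreal (2 * s)"
          using s_pos by (subst nn_integral_cmult_indicator) auto
        also have "\<dots> = ennreal (2 * M * s)"
          using Mpos s_pos by (simp add: ennreal_mult'[symmetric] mult_ac)
        finally have "measure N {-s..s} \<le> 2 * M * s"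
          using finite_measure.emeasure_eq_measure[OF prob_space.finite_measure[OF pN]] Mpos s_pos
          by (simp add: ennreal_le_iff)
        moreover have "measure N B = 1 - measure N {-s..s}"
          using prob_space.prob_compl[OF pN I_sets] compl by simp
        ultimately have "1 - 2 * M * s \<le> measure N B" by linarith
        then show ?thesis unfolding eq by (simp add: ennreal_leI)
      qed
      have pw: "ennreal (fX x * s^2) * (\<Prod>i<k. ennreal (fYX x (ys i) * indicator (A x) (ys i)))
          \<le> ennreal (fX x * (\<Prod>i<k. fYX x (ys i)) * Min ((\<lambda>i. (x - g (ys i))\<^sup>2) ` {..<k}))" for x ys
      proof -
        have P_nn: "0 \<le> (\<Prod>i<k. fYX x (ys i) * indicator (A x) (ys i))"
          by (intro prod_nonneg) (auto simp: fYX_nonneg)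
        have "(\<Prod>i<k. ennreal (fYX x (ys i) * indicator (A x) (ys i)))
              = ennreal (\<Prod>i<k. fYX x (ys i) * indicator (A x) (ys i))"
          by (rule prod_ennreal) (auto simp: fYX_nonneg)
        then have lhs: "ennreal (fX x * s^2) * (\<Prod>i<k. ennreal (fYX x (ys i) * indicator (A x) (ys i)))
           = ennreal (fX x * s^2 * (\<Prod>i<k. fYX x (ys i) * indicator (A x) (ys i)))"
          using P_nn fX_nonneg[of x] by (simp add: ennreal_mult)
        have fin: "finite ((\<lambda>i. (x - g (ys i))\<^sup>2) ` {..<k})" by simp
        have ne: "(\<lambda>i. (x - g (ys i))\<^sup>2) ` {..<k} \<noteq> {}" using kpos by (auto simp: lessThan_empty_iff)
        have Min_nn: "0 \<le> Min ((\<lambda>i. (x - g (ys i))\<^sup>2) ` {..<k})"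
          using Min_ge_iff[OF fin ne] by auto
        have PY_nn: "0 \<le> fX x * (\<Prod>i<k. fYX x (ys i))"
          using fX_nonneg[of x] by (intro mult_nonneg_nonneg prod_nonneg) (auto simp: fYX_nonneg)
        have "fX x * s^2 * (\<Prod>i<k. fYX x (ys i) * indicator (A x) (ys i))
              \<le> fX x * (\<Prod>i<k. fYX x (ys i)) * Min ((\<lambda>i. (x - g (ys i))\<^sup>2) ` {..<k})"
        proof (cases "\<forall>i<k. ys i \<in> A x")
          case True
          then have "(\<Prod>i<k. fYX x (ys i) * indicator (A x) (ys i)) = (\<Prod>i<k. fYX x (ys i))"
            by (intro prod.cong) auto
          moreover have sM: "s^2 \<le> Min ((\<lambda>i. (x - g (ys i))\<^sup>2) ` {..<k})"
          proof -
            have "s^2 \<le> (x - g (ys i))\<^sup>2" if "i < k" for i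
            proof -
              have "s < \<bar>x - g (ys i)\<bar>" using True that unfolding A_def by auto
              then have "s^2 \<le> \<bar>x - g (ys i)\<bar>^2" using s_pos by (intro power_mono) auto
              then show ?thesis by simp
            qed
            then show ?thesis using Min_ge_iff[OF fin ne] by auto
          qed
          ultimately show ?thesis using mult_left_mono[OF sM PY_nn] by (simp add: mult_ac)
        next
          case False
          then obtain i where "i < k" "ys i \<notin> A x" by auto
          then have z: "(\<Prod>i<k. fYX x (ys i) * indicator (A x) (ys i)) = 0"
            by (intro prod_zero bexI[of _ i]) auto
          show ?thesis unfolding z using Min_nn PY_nn by simp
        qed
        then show ?thesis unfolding lhs by (rule ennreal_leI)
      qed
      have inner: "ennreal (fX x * s^2) * ennreal ((1 - 2 * M * s)^k)
          \<le> (\<integral>\<^sup>+ys. ennreal (fX x * (\<Prod>i<k. fYX x (ys i)) * Min ((\<lambda>i. (x - g (ys i))\<^sup>2) ` {..<k}))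
                \<partial>(PiM {..<k} (\<lambda>_. (lborel :: 'b measure))))" for x
      proof -
        interpret product_sigma_finite "\<lambda>_. (lborel :: 'b measure)" by standard
        have hm[measurable]: "(\<lambda>y. ennreal (fYX x y * indicator (A x) y)) \<in> borel_measurable (lborel :: 'b measure)"
          by measurable
        have "ennreal ((1 - 2 * M * s)^k) = ennreal (1 - 2 * M * s)^k"
          using c_nonneg by (rule ennreal_power[symmetric])
        also have "\<dots> \<le> (\<integral>\<^sup>+y. ennreal (fYX x y * indicator (A x) y) \<partial>lborel)^k"
          by (intro power_mono prob) auto
        also have "\<dots> = (\<Prod>i<k. \<integral>\<^sup>+y. ennreal (fYX x y * indicator (A x) y) \<partial>lborel)"
          by simp
        also have "\<dots> = (\<integral>\<^sup>+ys. (\<Prod>i<k. ennreal (fYX x (ys i) * indicator (A x) (ys i)))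
                \<partial>(PiM {..<k} (\<lambda>_. (lborel :: 'b measure))))"
          by (rule product_nn_integral_prod[symmetric]) auto
        finally have 1: "ennreal ((1 - 2 * M * s)^k) \<le> \<dots>" .
        have "ennreal (fX x * s^2) * ennreal ((1 - 2 * M * s)^k) \<le> ennreal (fX x * s^2) *
               (\<integral>\<^sup>+ys. (\<Prod>i<k. ennreal (fYX x (ys i) * indicator (A x) (ys i)))
                \<partial>(PiM {..<k} (\<lambda>_. (lborel :: 'b measure))))"
          using 1 by (rule mult_left_mono) simp
        also have "\<dots> = (\<integral>\<^sup>+ys. ennreal (fX x * s^2) * (\<Prod>i<k. ennreal (fYX x (ys i) * indicator (A x) (ys i)))
                \<partial>(PiM {..<k} (\<lambda>_. (lborel :: 'b measure))))"
          by (rule nn_integral_cmult[symmetric]) measurable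
        also have "\<dots> \<le> (\<integral>\<^sup>+ys. ennreal (fX x * (\<Prod>i<k. fYX x (ys i)) * Min ((\<lambda>i. (x - g (ys i))\<^sup>2) ` {..<k}))
                \<partial>(PiM {..<k} (\<lambda>_. (lborel :: 'b measure))))"
          by (intro nn_integral_mono pw)
        finally show ?thesis .
      qed
      have "ennreal (exp (-2) * (1 / (2 * M * (1 + real k / 2)))\<^sup>2) = ennreal (exp (-2) * s^2)"
        unfolding s_def by simp
      also have "\<dots> \<le> ennreal (s^2 * (1 - 2 * M * s)^k)"
        using key by (intro ennreal_leI) (simp add: mult.commute mult_left_mono)
      also have "\<dots> = (\<integral>\<^sup>+x. ennreal (fX x) * ennreal (s^2 * (1 - 2 * M * s)^k) \<partial>lborel)"
        using fX_meas by (subst nn_integral_multc) (auto simp: fX_prob)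
      also have "\<dots> \<le> (\<integral>\<^sup>+x. ennreal (fX x * s^2) * ennreal ((1 - 2 * M * s)^k) \<partial>lborel)"
        using fX_nonneg c_nonneg by (intro nn_integral_mono) (simp add: ennreal_mult[symmetric] mult_ac)
      also have "\<dots> \<le> D2 fX fYX k"
        unfolding D2_def g_def[symmetric] by (intro nn_integral_mono inner)
      finally show "ennreal (exp (-2) * (1 / (2 * M * (1 + real k / 2)))\<^sup>2) \<le> D2 fX fYX k" .
    qed
  qed
qed

end
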